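(* Let $F=F(N,\mathcal D)$ be a connected GSC. If there exists $k\ge3$ such that $\chi(\Gamma_k)=|\mathcal D|^{k-1}-1$ or $\chi(\Gamma_k)=|\mathcal D|^{k-1}$, then $F$ is fragile.
   Context: GSC: $N\ge2$, $\mathcal D\subset\{0,\dots,N-1\}^2$ with $1<|\mathcal D|<N^2$, $\varphi_i(x)=\frac1N(x+i)$, $F$ the attractor $F=\bigcup_{i\in\mathcal D}\varphi_i(F)$; $\varphi_{i_1\cdots i_k}=\varphi_{i_1}\circ\cdots\circ\varphi_{i_k}$. $\Gamma_k$: vertex set $\mathcal D^k$, edge between distinct $\mathbf i,\mathbf j$ iff $\varphi_{\mathbf i}(F)\cap\varphi_{\mathbf j}(F)\ne\varnothing$. $\chi(G)$: max over cut vertices $v$ of the number of vertices of the second largest component of $G-\{v\}$ (0 if none). $F$ is fragile if there is a partition $\mathcal D=\mathcal D_1\cup\mathcal D_2$ into disjoint nonempty sets with $\big(\bigcup_{i\in\mathcal D_1}\varphi_i(F)\big)\cap\big(\bigcup_{i\in\mathcal D_2}\varphi_i(F)\big)$ a singleton. *)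

theory Defs
  imports "HOL-Analysis.Analysis"
begin

text \<open>Digits i = (a,b) with a,b in {0..N-1}; points of the plane are real \<times> real.\<close>

definition gsc_map :: "nat \<Rightarrow> nat \<times> nat \<Rightarrow> real \<times> real \<Rightarrow> real \<times> real" where
  "gsc_map N i x = ((fst x + real (fst i)) / real N, (snd x + real (snd i)) / real N)"

definition gsc_word_map :: "nat \<Rightarrow> (nat \<times> nat) list \<Rightarrow> real \<times> real \<Rightarrow> real \<times> real" where
  "gsc_word_map N w = foldr (\<lambda>i f. gsc_map N i \<circ> f) w id"

definition gsc_attractor :: "nat \<Rightarrow> (nat \<times> nat) set \<Rightarrow> (real \<times> real) set" where
  "gsc_attractor N D = (THE K. compact K \<and> K \<noteq> {} \<and> K = (\<Union>i\<in>D. gsc_map N i ` K))"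

definition gamma_vertices :: "(nat \<times> nat) set \<Rightarrow> nat \<Rightarrow> (nat \<times> nat) list set" where
  "gamma_vertices D k = {w. set w \<subseteq> D \<and> length w = k}"

definition gamma_edge :: "nat \<Rightarrow> (nat \<times> nat) set \<Rightarrow> (nat \<times> nat) list \<Rightarrow> (nat \<times> nat) list \<Rightarrow> bool" where
  "gamma_edge N D v w \<longleftrightarrow> v \<noteq> w \<and>
     gsc_word_map N v ` gsc_attractor N D \<inter> gsc_word_map N w ` gsc_attractor N D \<noteq> {}"

text \<open>A graph is a vertex set V with an edge relation E (only edges inside V count).\<close>
definition greach :: "'a set \<Rightarrow> ('a \<Rightarrow> 'a \<Rightarrow> bool) \<Rightarrow> 'a \<Rightarrow> 'a \<Rightarrow> bool" where
  "greach V E = (\<lambda>a b. a \<in> V \<and> b \<in> V \<and> E a b)\<^sup>*\<^sup>*"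

definition gcomponents :: "'a set \<Rightarrow> ('a \<Rightarrow> 'a \<Rightarrow> bool) \<Rightarrow> 'a set set" where
  "gcomponents V E = {{y \<in> V. greach V E x y} | x. x \<in> V}"

definition cut_vertex :: "'a set \<Rightarrow> ('a \<Rightarrow> 'a \<Rightarrow> bool) \<Rightarrow> 'a \<Rightarrow> bool" where
  "cut_vertex V E v \<longleftrightarrow> v \<in> V \<and> card (gcomponents (V - {v}) E) > card (gcomponents V E)"

text \<open>Number of vertices of the second largest member of a family of (finite) components,
  counted with multiplicity (0 if there are fewer than two components).\<close>
definition second_largest_size :: "'a set set \<Rightarrow> nat" where
  "second_largest_size S = Max ({card C | C. C \<in> S \<and> (\<exists>C'\<in>S. C' \<noteq> C \<and> card C \<le> card C')} \<union> {0})"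

definition chi :: "'a set \<Rightarrow> ('a \<Rightarrow> 'a \<Rightarrow> bool) \<Rightarrow> nat" where
  "chi V E = Max ({second_largest_size (gcomponents (V - {v}) E) | v. cut_vertex V E v} \<union> {0})"

definition fragile :: "nat \<Rightarrow> (nat \<times> nat) set \<Rightarrow> bool" where
  "fragile N D \<longleftrightarrow> (\<exists>D1 D2. D1 \<union> D2 = D \<and> D1 \<inter> D2 = {} \<and> D1 \<noteq> {} \<and> D2 \<noteq> {} \<and>
     (\<exists>p. (\<Union>i\<in>D1. gsc_map N i ` gsc_attractor N D) \<inter> (\<Union>i\<in>D2. gsc_map N i ` gsc_attractor N D) = {p}))"

end

theory Submission
  imports Defs
begin


definition usq :: "(real \<times> real) set" where
  "usq = {x. 0 \<le> fst x \<and> fst x \<le> 1 \<and> 0 \<le> snd x \<and> snd x \<le> 1}"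

lemma gsc_map_alt: "gsc_map N i x = (1 / real N) *\<^sub>R (x + (real (fst i), real (snd i)))"
  by (cases x) (simp add: gsc_map_def divide_inverse mult.commute)

lemma word_Nil[simp]: "gsc_word_map N [] = id"
  by (simp add: gsc_word_map_def)

lemma word_Cons[simp]: "gsc_word_map N (i # w) = gsc_map N i \<circ> gsc_word_map N w"
  by (simp add: gsc_word_map_def)

lemma word_append: "gsc_word_map N (v @ w) = gsc_word_map N v \<circ> gsc_word_map N w"
  by (induction v) (auto simp: comp_assoc)

lemma dist_map: "N > 0 \<Longrightarrow> dist (gsc_map N i a) (gsc_map N i b) = dist a b / real N"
proof -
  assume "N > 0"
  have "gsc_map N i a - gsc_map N i b = (1 / real N) *\<^sub>R (a - b)"
    unfolding gsc_map_alt by (simp add: algebra_simps)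
  then show ?thesis by (simp add: dist_norm)
qed

lemma dist_word: "N > 0 \<Longrightarrow> dist (gsc_word_map N w a) (gsc_word_map N w b) = dist a b / real N ^ length w"
  by (induction w) (auto simp: dist_map)

lemma cont_map: "continuous_on S (gsc_map N i)"
  unfolding gsc_map_alt by (intro continuous_intros)

lemma cont_word: "continuous_on S (gsc_word_map N w)"
proof (induction w arbitrary: S)
  case Nil then show ?case by (simp add: continuous_on_id)
next
  case (Cons i w) then show ?case
    using continuous_on_compose2[OF cont_map[of UNIV] Cons.IH[of S]] by simp
qed

lemma map_usq:
  assumes "i \<in> {0..<N} \<times> {0..<N}" "x \<in> usq"
  shows "gsc_map N i x \<in> usq"
proof -
  have N: "real N \<ge> 1" "real (fst i) + 1 \<le> real N" "real (snd i) + 1 \<le> real N"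
    using assms(1) by auto
  show ?thesis using assms(2) N unfolding usq_def gsc_map_def
    by (auto simp: divide_simps)
qed

lemma word_usq:
  assumes "set w \<subseteq> {0..<N} \<times> {0..<N}" "x \<in> usq"
  shows "gsc_word_map N w x \<in> usq"
  using assms by (induction w) (auto intro: map_usq)



lemma iter_sub:
  assumes "\<forall>d\<in>D. gsc_map N d ` K \<subseteq> K" "set w \<subseteq> D" "y \<in> K"
  shows "gsc_word_map N w y \<in> K"
  using assms(2,3) by (induction w) (use assms(1) in auto)

lemma iter_decomp:
  assumes "K = (\<Union>i\<in>D. gsc_map N i ` K)" "x \<in> K"
  shows "\<exists>w y. set w \<subseteq> D \<and> length w = n \<and> y \<in> K \<and> x = gsc_word_map N w y"
proof (induction n)
  case 0 then show ?case using assms(2) by (intro exI[of _ "[]"] exI[of _ x]) auto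
next
  case (Suc n)
  then obtain w y where w: "set w \<subseteq> D" "length w = n" "y \<in> K" "x = gsc_word_map N w y" by blast
  from w(3) assms(1) obtain i z where "i \<in> D" "z \<in> K" "y = gsc_map N i z" by blast
  then show ?case using w
    by (intro exI[of _ "w @ [i]"] exI[of _ z]) (auto simp: word_append)
qed

lemma attractor_unique_aux:
  assumes N2: "N \<ge> 2" and DQ: "D \<subseteq> {0..<N} \<times> {0..<N}" and d0: "d0 \<in> D"
  defines "p0 \<equiv> (real (fst d0) / (real N - 1), real (snd d0) / (real N - 1))"
  defines "P \<equiv> {gsc_word_map N w p0 | w. set w \<subseteq> D}"
  assumes K: "compact K" "K \<noteq> {}" "K = (\<Union>i\<in>D. gsc_map N i ` K)"
  shows "K = closure P"
proof -
  have Npos: "N > 0" using N2 by auto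
  have rN: "real N > 1" using N2 by auto
  have fix0: "gsc_map N d0 p0 = p0"
    unfolding p0_def gsc_map_def using rN by (auto simp: field_simps)
  have Ksub: "\<forall>d\<in>D. gsc_map N d ` K \<subseteq> K" using K(3) by blast
  have clK: "closed K" using K(1) compact_imp_closed by auto
  obtain x0 where x0: "x0 \<in> K" using K(2) by blast
  have p0K: "p0 \<in> K"
  proof -
    have "p0 \<in> closure K"
      unfolding closure_approachable
    proof (intro allI impI)
      fix e :: real assume e: "e > 0"
      obtain n where n: "dist x0 p0 / e < real N ^ n" using real_arch_pow[OF rN] by blast
      have eq: "gsc_word_map N (replicate n d0) p0 = p0"
        by (induction n) (auto simp: fix0)
      have "dist (gsc_word_map N (replicate n d0) x0) p0 = dist x0 p0 / real N ^ n"
        using dist_word[OF Npos, of "replicate n d0" x0 p0] eq by simp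
      also have "\<dots> < e" using n e rN by (simp add: field_simps)
      finally have "dist (gsc_word_map N (replicate n d0) x0) p0 < e" .
      moreover have "gsc_word_map N (replicate n d0) x0 \<in> K"
      proof -
        have "set (replicate n d0) \<subseteq> D" using d0 by (induction n) auto
        then show ?thesis using iter_sub[OF Ksub, of "replicate n d0" x0] x0 by auto
      qed
      ultimately show "\<exists>y\<in>K. dist y p0 < e" by blast
    qed
    then show ?thesis using clK by (simp add: closure_closed)
  qed
  have PK: "P \<subseteq> K"
  proof
    fix x assume "x \<in> P"
    then obtain w where w: "set w \<subseteq> D" "x = gsc_word_map N w p0" unfolding P_def by blast
    show "x \<in> K" using iter_sub[OF Ksub w(1) p0K] w(2) by simp
  qed
  have "closure P \<subseteq> K" using PK clK closure_minimal by blast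
  moreover have "K \<subseteq> closure P"
  proof
    fix x assume xK: "x \<in> K"
    obtain B where B: "\<forall>y\<in>K. dist y p0 \<le> B"
      using compact_imp_bounded[OF K(1)] unfolding bounded_def
      by (metis dist_commute dist_triangle add.commute order_trans add_le_cancel_left)
    show "x \<in> closure P"
      unfolding closure_approachable
    proof (intro allI impI)
      fix e :: real assume e: "e > 0"
      obtain n where n: "\<bar>B\<bar> / e < real N ^ n" using real_arch_pow[OF rN] by blast
      obtain w y where w: "set w \<subseteq> D" "length w = n" "y \<in> K" "x = gsc_word_map N w y"
        using iter_decomp[OF K(3) xK] by blast
      have "dist (gsc_word_map N w p0) x = dist y p0 / real N ^ n"
        using dist_word[OF Npos, of w p0 y] w by (simp add: dist_commute)
      also have "\<dots> \<le> \<bar>B\<bar> / real N ^ n" using B w(3) rN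
        by (intro divide_right_mono) auto
      also have "\<dots> < e" using n e rN by (simp add: field_simps)
      finally show "\<exists>y\<in>P. dist y x < e" using w(1) unfolding P_def by blast
    qed
  qed
  ultimately show ?thesis by blast
qed

lemma attractor_exists_aux:
  assumes N2: "N \<ge> 2" and DQ: "D \<subseteq> {0..<N} \<times> {0..<N}" and d0: "d0 \<in> D"
  defines "p0 \<equiv> (real (fst d0) / (real N - 1), real (snd d0) / (real N - 1))"
  defines "P \<equiv> {gsc_word_map N w p0 | w. set w \<subseteq> D}"
  shows "compact (closure P) \<and> closure P \<noteq> {} \<and> closure P = (\<Union>i\<in>D. gsc_map N i ` closure P)
     \<and> closure P \<subseteq> usq"
proof -
  have rN: "real N > 1" using N2 by auto
  have fix0: "gsc_map N d0 p0 = p0"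
    unfolding p0_def gsc_map_def using rN by (auto simp: field_simps)
  have p0q: "p0 \<in> usq" unfolding p0_def usq_def using d0 DQ rN
    by (auto simp: field_simps)
  have Pq: "P \<subseteq> usq" unfolding P_def using word_usq p0q DQ by blast
  have usqe: "usq = {0..1} \<times> {0..1}" unfolding usq_def by auto
  have cq: "compact usq" unfolding usqe by (intro compact_Times compact_Icc)
  have usqc: "closed usq" using cq compact_imp_closed by auto
  have clq: "closure P \<subseteq> usq" using Pq usqc closure_minimal by blast
  have bq: "bounded usq" using cq compact_imp_bounded by auto
  have cp: "compact (closure P)"
    using bounded_subset[OF bq clq] by (simp add: compact_eq_bounded_closed)
  have ne: "closure P \<noteq> {}" using P_def closure_subset[of P]
    by (metis (mono_tags, lifting) empty_iff empty_subsetI mem_Collect_eq set_empty subset_empty)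
  have PU: "P = (\<Union>i\<in>D. gsc_map N i ` P)"
  proof
    show "P \<subseteq> (\<Union>i\<in>D. gsc_map N i ` P)"
    proof
      fix x assume "x \<in> P"
      then obtain w where w: "set w \<subseteq> D" "x = gsc_word_map N w p0" unfolding P_def by blast
      show "x \<in> (\<Union>i\<in>D. gsc_map N i ` P)"
      proof (cases w)
        case Nil then show ?thesis using w d0 fix0 unfolding P_def
          by (auto intro!: bexI[of _ d0] image_eqI[of _ _ p0] exI[of _ "[]"])
      next
        case (Cons i w') then show ?thesis using w unfolding P_def by auto
      qed
    qed
  next
    show "(\<Union>i\<in>D. gsc_map N i ` P) \<subseteq> P"
    proof
      fix x assume "x \<in> (\<Union>i\<in>D. gsc_map N i ` P)"
      then obtain i w where "i \<in> D" "set w \<subseteq> D" "x = gsc_map N i (gsc_word_map N w p0)"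
        unfolding P_def by blast
      then have "set (i # w) \<subseteq> D \<and> x = gsc_word_map N (i # w) p0" by simp
      then show "x \<in> P" unfolding P_def by blast
    qed
  qed
  have imgcl: "gsc_map N i ` closure P = closure (gsc_map N i ` P)" for i
  proof
    show "gsc_map N i ` closure P \<subseteq> closure (gsc_map N i ` P)"
      by (rule image_closure_subset[OF cont_map]) (simp_all add: closure_subset)
    have "compact (gsc_map N i ` closure P)" by (rule compact_continuous_image[OF cont_map cp])
    then show "closure (gsc_map N i ` P) \<subseteq> gsc_map N i ` closure P"
      by (intro closure_minimal) (auto simp: compact_imp_closed closure_subset image_mono)
  qed
  have fD: "finite D" using DQ finite_subset by blast
  have "closure P = closure (\<Union>i\<in>D. gsc_map N i ` P)" using PU by simp
  also have "\<dots> = (\<Union>i\<in>D. closure (gsc_map N i ` P))"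
  proof
    show "closure (\<Union>i\<in>D. gsc_map N i ` P) \<subseteq> (\<Union>i\<in>D. closure (gsc_map N i ` P))"
      by (intro closure_minimal) (auto intro: closed_UN fD closure_subset[THEN subsetD])
    show "(\<Union>i\<in>D. closure (gsc_map N i ` P)) \<subseteq> closure (\<Union>i\<in>D. gsc_map N i ` P)"
      by (auto intro: closure_mono[THEN subsetD, rotated])
  qed
  also have "\<dots> = (\<Union>i\<in>D. gsc_map N i ` closure P)" using imgcl by simp
  finally show ?thesis using cp ne clq by blast
qed

lemma attractor_props:
  assumes N2: "N \<ge> 2" and DQ: "D \<subseteq> {0..<N} \<times> {0..<N}" and D0: "D \<noteq> {}"
  shows "compact (gsc_attractor N D) \<and> gsc_attractor N D \<noteq> {} \<and>
    gsc_attractor N D = (\<Union>i\<in>D. gsc_map N i ` gsc_attractor N D) \<and> gsc_attractor N D \<subseteq> usq"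
proof -
  obtain d0 where d0: "d0 \<in> D" using D0 by blast
  define p0 where "p0 \<equiv> (real (fst d0) / (real N - 1), real (snd d0) / (real N - 1))"
  define P where "P \<equiv> {gsc_word_map N w p0 | w. set w \<subseteq> D}"
  have ex: "compact (closure P) \<and> closure P \<noteq> {} \<and> closure P = (\<Union>i\<in>D. gsc_map N i ` closure P)
     \<and> closure P \<subseteq> usq" using attractor_exists_aux[OF N2 DQ d0] unfolding P_def p0_def by blast
  have "gsc_attractor N D = closure P"
    unfolding gsc_attractor_def
  proof (rule the_equality)
    show "compact (closure P) \<and> closure P \<noteq> {} \<and> closure P = (\<Union>i\<in>D. gsc_map N i ` closure P)"
      using ex by blast
    fix K assume "compact K \<and> K \<noteq> {} \<and> K = (\<Union>i\<in>D. gsc_map N i ` K)"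
    then show "K = closure P" using attractor_unique_aux[OF N2 DQ d0] unfolding P_def p0_def by blast
  qed
  then show ?thesis using ex by simp
qed



definition pc :: "nat \<Rightarrow> nat \<Rightarrow> nat \<Rightarrow> real" where
  "pc N a1 a2 = (if a1 = a2 then real a1 / (real N - 1)
     else if a2 = N - 1 then (real a1 + 1) / real N else real a1 / real N)"

lemma pc_bounds: "N \<ge> 2 \<Longrightarrow> a1 < N \<Longrightarrow> 0 \<le> pc N a1 a2 \<and> pc N a1 a2 \<le> 1"
  unfolding pc_def by (auto simp: field_simps)

lemma coord:
  fixes N a1 a2 b :: nat and ec :: int and yc y1c tc z1c :: real
  assumes N2: "N \<ge> 2" and a: "a1 < N" "a2 < N" "b < N"
    and yc: "yc = (y1c + real a1) / real N" and y1c: "y1c = (tc + real a2) / real N"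
    and t: "0 \<le> tc" "tc \<le> 1" and z: "0 \<le> z1c" "z1c \<le> 1"
    and ze: "yc - of_int ec = (z1c + real b) / real N"
  shows "y1c = z1c + of_int (int b + int N * ec - int a1)"
    and "ec \<noteq> 0 \<Longrightarrow> int b + int N * ec - int a1 = ec"
    and "ec \<noteq> 0 \<or> int b + int N * ec - int a1 \<noteq> 0 \<Longrightarrow> yc = pc N a1 a2"
proof -
  define e1 where "e1 = int b + int N * ec - int a1"
  have rN: "real N \<ge> 2" using N2 by simp
  have ra: "real a1 \<le> real N - 1" "real a2 \<le> real N - 1" "real b \<le> real N - 1"
    using a by (simp_all add: of_nat_diff[symmetric] le_diff_conv2)
  have y1q: "y1c = z1c + of_int e1"
  proof -
    have yce: "yc = of_int ec + (z1c + real b) / real N" using ze by simp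
    then have "y1c = real N * yc - real a1" using yc rN by (simp add: field_simps)
    also have "\<dots> = real N * of_int ec + z1c + real b - real a1"
      using yce rN by (simp add: field_simps)
    finally show ?thesis unfolding e1_def by simp
  qed
  then show "y1c = z1c + of_int (int b + int N * ec - int a1)" unfolding e1_def .
  have y1b: "0 \<le> y1c" "y1c \<le> 1" unfolding y1c using t ra rN by (auto simp: divide_le_eq_1)
  have ycb: "0 \<le> yc" "yc \<le> 1" unfolding yc using y1b ra rN by (auto simp: divide_le_eq_1)
  have zb: "0 \<le> (z1c + real b) / real N" "(z1c + real b) / real N \<le> 1"
    using z ra rN by (auto simp: divide_le_eq_1)
  have e1b: "-1 \<le> e1" "e1 \<le> 1"
  proof -
    have "-1 \<le> (of_int e1::real)" "(of_int e1::real) \<le> 1" using y1q y1b z by linarith+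
    then show "-1 \<le> e1" "e1 \<le> 1" by linarith+
  qed
  have ecb: "-1 \<le> ec" "ec \<le> 1"
  proof -
    have "-1 \<le> (of_int ec::real)" "(of_int ec::real) \<le> 1" using ze ycb zb by linarith+
    then show "-1 \<le> ec" "ec \<le> 1" by linarith+
  qed
  have a2top: "a2 = N - 1" if "y1c = 1"
  proof -
    have "tc + real a2 = real N" using y1c that rN by (simp add: field_simps)
    then have "real a2 \<ge> real N - 1" using t by linarith
    then show ?thesis using a by linarith
  qed
  have a2bot: "a2 = 0" if "y1c = 0"
  proof -
    have "tc + real a2 = 0" using y1c that rN by (simp add: field_simps)
    then show ?thesis using t by linarith
  qed
  show "ec \<noteq> 0 \<Longrightarrow> int b + int N * ec - int a1 = ec"
  proof -
    assume "ec \<noteq> 0"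
    then have "ec = 1 \<or> ec = -1" using ecb by linarith
    then show ?thesis
    proof
      assume "ec = 1"
      then have "e1 \<ge> 1" unfolding e1_def using a by (simp; linarith)
      then show ?thesis using e1b \<open>ec = 1\<close> unfolding e1_def by linarith
    next
      assume "ec = -1"
      then have "e1 \<le> -1" unfolding e1_def using a by (simp; linarith)
      then show ?thesis using e1b \<open>ec = -1\<close> unfolding e1_def by linarith
    qed
  qed
  show "ec \<noteq> 0 \<or> int b + int N * ec - int a1 \<noteq> 0 \<Longrightarrow> yc = pc N a1 a2"
  proof -
    assume h: "ec \<noteq> 0 \<or> int b + int N * ec - int a1 \<noteq> 0"
    consider "ec = 1" | "ec = -1" | "ec = 0" "e1 = 1" | "ec = 0" "e1 = -1"
      using h ecb e1b unfolding e1_def by linarith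
    then show ?thesis
    proof cases
      case 1
      then have "e1 \<ge> 1" unfolding e1_def using a by (simp; linarith)
      then have "e1 = 1" using e1b by linarith
      have "b = 0" "a1 = N - 1" using \<open>e1 = 1\<close> 1 a unfolding e1_def by (simp; linarith)+
      have "y1c = 1" using \<open>e1 = 1\<close> y1q y1b z by simp
      then have "a2 = N - 1" by (rule a2top)
      have "yc = 1" using yc \<open>y1c = 1\<close> \<open>a1 = N - 1\<close> rN N2 by (simp add: field_simps of_nat_diff)
      moreover have "pc N a1 a2 = 1" unfolding pc_def using \<open>a2 = N - 1\<close> \<open>a1 = N - 1\<close> rN N2
        by (simp add: of_nat_diff)
      ultimately show ?thesis by simp
    next
      case 2
      then have "e1 \<le> -1" unfolding e1_def using a by (simp; linarith)
      then have "e1 = -1" using e1b by linarith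
      have "a1 = 0" using \<open>e1 = -1\<close> 2 a unfolding e1_def by (simp; linarith)
      have "y1c = 0" using \<open>e1 = -1\<close> y1q y1b z by simp
      then have "a2 = 0" by (rule a2bot)
      have "yc = 0" using yc \<open>y1c = 0\<close> \<open>a1 = 0\<close> by simp
      moreover have "pc N a1 a2 = 0" unfolding pc_def using \<open>a2 = 0\<close> \<open>a1 = 0\<close> by simp
      ultimately show ?thesis by simp
    next
      case 3
      then have "y1c = 1" using y1q y1b z by simp
      then have a2: "a2 = N - 1" by (rule a2top)
      have yv: "yc = (real a1 + 1) / real N" using yc \<open>y1c = 1\<close> by simp
      show ?thesis
      proof (cases "a1 = a2")
        case True
        then show ?thesis using yv a2 rN N2 unfolding pc_def by (simp add: of_nat_diff)
      next
        case False then show ?thesis using yv a2 unfolding pc_def by simp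
      qed
    next
      case 4
      then have "y1c = 0" using y1q y1b z by simp
      then have a2: "a2 = 0" by (rule a2bot)
      have yv: "yc = real a1 / real N" using yc \<open>y1c = 0\<close> by simp
      show ?thesis
      proof (cases "a1 = a2")
        case True
        then show ?thesis using yv a2 unfolding pc_def by simp
      next
        case False then show ?thesis using yv a2 N2 unfolding pc_def by simp
      qed
    qed
  qed
qed



definition sh :: "int \<times> int \<Rightarrow> real \<times> real" where
  "sh e = (of_int (fst e), of_int (snd e))"

definition pstar :: "nat \<Rightarrow> nat \<times> nat \<Rightarrow> nat \<times> nat \<Rightarrow> real \<times> real" where
  "pstar N u1 u2 = (pc N (fst u1) (fst u2), pc N (snd u1) (snd u2))"

lemma stepG:
  assumes N2: "N \<ge> 2" and DQ: "D \<subseteq> {0..<N} \<times> {0..<N}" and FQ: "F \<subseteq> usq"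
    and Ffix: "F = (\<Union>d\<in>D. gsc_map N d ` F)"
    and E0: "(0,0) \<notin> E" and Ydef: "Y = {y\<in>F. \<exists>e\<in>E. y - sh e \<in> F}"
    and U: "\<And>y d1 d2. y \<in> Y \<Longrightarrow> d1 \<in> D \<Longrightarrow> d2 \<in> D \<Longrightarrow>
              y \<in> gsc_map N d1 ` gsc_map N d2 ` F \<Longrightarrow> d1 = u1 \<and> d2 = u2"
    and yY: "y \<in> Y"
  shows "y = pstar N u1 u2 \<or>
    (u1 = u2 \<and> real N *\<^sub>R y - (real (fst u1), real (snd u1)) \<in> Y \<and>
     real N *\<^sub>R y - (real (fst u1), real (snd u1)) - pstar N u1 u2 = real N *\<^sub>R (y - pstar N u1 u2))"
proof -
  have rN: "real N \<ge> 2" using N2 by simp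
  obtain e where e: "e \<in> E" "y \<in> F" "y - sh e \<in> F" using yY Ydef by blast
  obtain d1 y' where d1: "d1 \<in> D" "y' \<in> F" "y = gsc_map N d1 y'" using e(2) Ffix by blast
  obtain d2 t where d2: "d2 \<in> D" "t \<in> F" "y' = gsc_map N d2 t" using d1(2) Ffix by blast
  have "d1 = u1 \<and> d2 = u2" using U[OF yY d1(1) d2(1)] d1 d2 by blast
  then have du: "d1 = u1" "d2 = u2" by auto
  obtain bb z1 where bb: "bb \<in> D" "z1 \<in> F" "y - sh e = gsc_map N bb z1" using e(3) Ffix by blast
  have tq: "t \<in> usq" and zq: "z1 \<in> usq" using d2 bb FQ by auto
  have uD: "u1 \<in> D" "u2 \<in> D" using d1 d2 du by auto
  have lt: "fst u1 < N" "snd u1 < N" "fst u2 < N" "snd u2 < N" "fst bb < N" "snd bb < N"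
    using uD bb(1) DQ by auto
  define e1 where "e1 = (int (fst bb) + int N * fst e - int (fst u1),
                         int (snd bb) + int N * snd e - int (snd u1))"
  have cx: "fst y' = fst z1 + of_int (fst e1)"
           "fst e \<noteq> 0 \<Longrightarrow> fst e1 = fst e"
           "fst e \<noteq> 0 \<or> fst e1 \<noteq> 0 \<Longrightarrow> fst y = pc N (fst u1) (fst u2)"
    unfolding e1_def fst_conv
    by (rule coord[OF N2 lt(1) lt(3) lt(5), where y1c="fst y'" and tc="fst t" and z1c="fst z1"],
        (use d1(3) d2(3) du bb(3) tq zq in \<open>auto simp: gsc_map_def usq_def sh_def\<close>))+
  have cy: "snd y' = snd z1 + of_int (snd e1)"
           "snd e \<noteq> 0 \<Longrightarrow> snd e1 = snd e"
           "snd e \<noteq> 0 \<or> snd e1 \<noteq> 0 \<Longrightarrow> snd y = pc N (snd u1) (snd u2)"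
    unfolding e1_def snd_conv
    by (rule coord[OF N2 lt(2) lt(4) lt(6), where y1c="snd y'" and tc="snd t" and z1c="snd z1"],
        (use d1(3) d2(3) du bb(3) tq zq in \<open>auto simp: gsc_map_def usq_def sh_def\<close>))+
  show ?thesis
  proof (cases "e1 = e")
    case False
    have "fst e \<noteq> 0 \<or> fst e1 \<noteq> 0"
    proof (rule ccontr)
      assume "\<not> ?thesis"
      then have "fst e = 0" "fst e1 = 0" by auto
      then have "snd e \<noteq> 0" using E0 e(1) by (metis prod.collapse)
      then have "snd e1 = snd e" using cy(2) by blast
      then show False using False \<open>fst e = 0\<close> \<open>fst e1 = 0\<close> by (simp add: prod_eq_iff)
    qed
    moreover have "snd e \<noteq> 0 \<or> snd e1 \<noteq> 0"
    proof (rule ccontr)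
      assume "\<not> ?thesis"
      then have "snd e = 0" "snd e1 = 0" by auto
      then have "fst e \<noteq> 0" using E0 e(1) by (metis prod.collapse)
      then have "fst e1 = fst e" using cx(2) by blast
      then show False using False \<open>snd e = 0\<close> \<open>snd e1 = 0\<close> by (simp add: prod_eq_iff)
    qed
    ultimately have "y = pstar N u1 u2" using cx(3) cy(3) unfolding pstar_def by (simp add: prod_eq_iff)
    then show ?thesis by blast
  next
    case True
    have y'F: "y' \<in> F" by (rule d1(2))
    have "y' - sh e = z1" using cx(1) cy(1) True unfolding sh_def by (simp add: prod_eq_iff)
    then have y'Y: "y' \<in> Y" using Ydef y'F bb(2) e(1) by auto
    obtain d t' where dt: "d \<in> D" "t' \<in> F" "t = gsc_map N d t'" using d2(2) Ffix by blast
    have "y' \<in> gsc_map N u2 ` gsc_map N d ` F" using d2(3) du dt by blast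
    then have uu: "u2 = u1" using U[OF y'Y uD(2) dt(1)] by blast
    have yy: "y = gsc_map N u1 y'" using d1(3) du by simp
    have "fst y = (fst y' + real (fst u1)) / real N" "snd y = (snd y' + real (snd u1)) / real N"
      by (subst yy, simp add: gsc_map_def)+
    then have fy: "fst y' + real (fst u1) = real N * fst y" "snd y' + real (snd u1) = real N * snd y"
      using rN by (simp_all add: field_simps)
    have gy: "real N *\<^sub>R y - (real (fst u1), real (snd u1)) = y'"
    proof (rule prod_eqI)
      show "fst (real N *\<^sub>R y - (real (fst u1), real (snd u1))) = fst y'" using fy(1) by simp
      show "snd (real N *\<^sub>R y - (real (fst u1), real (snd u1))) = snd y'" using fy(2) by simp
    qed
    have p: "pstar N u1 u2 = (real (fst u1) / (real N - 1), real (snd u1) / (real N - 1))"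
      unfolding pstar_def pc_def using uu by simp
    have n1: "real N - 1 \<noteq> 0" using rN by simp
    have "y' - pstar N u1 u2 = real N *\<^sub>R (y - pstar N u1 u2)"
    proof (rule prod_eqI)
      have e: "fst y' = real N * fst y - real (fst u1)" using fy(1) by simp
      have "real N * fst y - real (fst u1) - real (fst u1) / (real N - 1)
          = real N * (fst y - real (fst u1) / (real N - 1))" using n1 by (simp add: field_simps)
      then show "fst (y' - pstar N u1 u2) = fst (real N *\<^sub>R (y - pstar N u1 u2))"
        unfolding p using e by simp
      have e: "snd y' = real N * snd y - real (snd u1)" using fy(2) by simp
      have "real N * snd y - real (snd u1) - real (snd u1) / (real N - 1)
          = real N * (snd y - real (snd u1) / (real N - 1))" using n1 by (simp add: field_simps)
      then show "snd (y' - pstar N u1 u2) = snd (real N *\<^sub>R (y - pstar N u1 u2))"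
        unfolding p using e by simp
    qed
    then show ?thesis using gy y'Y uu by simp
  qed
qed

lemma dist_usq: "a \<in> usq \<Longrightarrow> b \<in> usq \<Longrightarrow> dist a b \<le> 2"
proof -
  assume a: "a \<in> usq" and b: "b \<in> usq"
  have "dist a b = sqrt ((fst a - fst b)^2 + (snd a - snd b)^2)"
    by (cases a, cases b) (simp add: dist_Pair_Pair dist_real_def)
  also have "\<dots> \<le> \<bar>fst a - fst b\<bar> + \<bar>snd a - snd b\<bar>" by (rule sqrt_sum_squares_le_sum_abs)
  also have "\<dots> \<le> 2" using a b unfolding usq_def by auto
  finally show ?thesis .
qed

lemma lemG:
  assumes N2: "N \<ge> 2" and DQ: "D \<subseteq> {0..<N} \<times> {0..<N}" and FQ: "F \<subseteq> usq"
    and Ffix: "F = (\<Union>d\<in>D. gsc_map N d ` F)"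
    and E0: "(0,0) \<notin> E" and Ydef: "Y = {y\<in>F. \<exists>e\<in>E. y - sh e \<in> F}"
    and U: "\<And>y d1 d2. y \<in> Y \<Longrightarrow> d1 \<in> D \<Longrightarrow> d2 \<in> D \<Longrightarrow>
              y \<in> gsc_map N d1 ` gsc_map N d2 ` F \<Longrightarrow> d1 = u1 \<and> d2 = u2"
    and yY: "y \<in> Y"
  shows "y = pstar N u1 u2"
proof -
  let ?p = "pstar N u1 u2"
  have rN: "real N > 1" using N2 by simp
  obtain d1 y' where d1: "d1 \<in> D" "y' \<in> F" "y = gsc_map N d1 y'" using yY Ydef Ffix by blast
  obtain d2 t where d2: "d2 \<in> D" "t \<in> F" "y' = gsc_map N d2 t" using d1(2) Ffix by blast
  have "d1 = u1 \<and> d2 = u2" using U[OF yY d1(1) d2(1)] d1 d2 by blast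
  then have "u1 \<in> D" using d1 by auto
  then have pq: "?p \<in> usq" unfolding pstar_def usq_def using pc_bounds[OF N2] DQ by auto
  have bound: "\<forall>z\<in>Y. dist z ?p \<le> 2 / real N ^ j" for j
  proof (induction j)
    case 0 show ?case
    proof
      fix z assume "z \<in> Y"
      then have "z \<in> usq" using FQ Ydef by blast
      then show "dist z ?p \<le> 2 / real N ^ 0" using dist_usq[OF _ pq] by simp
    qed
  next
    case (Suc j)
    show ?case
    proof
      fix z assume zY: "z \<in> Y"
      from stepG[OF N2 DQ FQ Ffix E0 Ydef U zY]
      show "dist z ?p \<le> 2 / real N ^ Suc j"
      proof
        assume "z = ?p" then show ?thesis by simp
      next
        let ?g = "real N *\<^sub>R z - (real (fst u1), real (snd u1))"
        assume h: "u1 = u2 \<and> ?g \<in> Y \<and> ?g - ?p = real N *\<^sub>R (z - ?p)"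
        then have "dist ?g ?p \<le> 2 / real N ^ j" using Suc by blast
        moreover have "dist ?g ?p = real N * dist z ?p"
        proof -
          have eq: "?g - ?p = real N *\<^sub>R (z - ?p)" using h by blast
          have "dist ?g ?p = norm (real N *\<^sub>R (z - ?p))" by (simp only: dist_norm eq)
          then show ?thesis by (simp add: dist_norm)
        qed
        ultimately have "real N * dist z ?p \<le> 2 / real N ^ j" by simp
        then show ?thesis using rN by (simp add: field_simps)
      qed
    qed
  qed
  have "dist y ?p = 0"
  proof (rule ccontr)
    assume "dist y ?p \<noteq> 0"
    then have dp: "dist y ?p > 0" by simp
    obtain j where j: "2 / dist y ?p < real N ^ j" using real_arch_pow[OF rN] by blast
    have "dist y ?p \<le> 2 / real N ^ j" using bound yY by blast
    then show False using j dp rN by (simp add: field_simps)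
  qed
  then show ?thesis by simp
qed



lemma finite_V: "finite D \<Longrightarrow> finite (gamma_vertices D n)"
  unfolding gamma_vertices_def by (rule finite_lists_length_eq)

lemma card_V: "finite D \<Longrightarrow> card (gamma_vertices D n) = card D ^ n"
  unfolding gamma_vertices_def by (rule card_lists_length_eq)

lemma comp_closed:
  assumes "C \<in> gcomponents V E" "y \<in> C" "z \<in> V" "E y z"
  shows "z \<in> C"
proof -
  obtain x where x: "x \<in> V" "C = {y \<in> V. greach V E x y}" using assms(1) unfolding gcomponents_def by blast
  have "greach V E x y" using assms(2) x by blast
  moreover have "(\<lambda>a b. a \<in> V \<and> b \<in> V \<and> E a b) y z" using assms(2-4) x by blast
  ultimately have "greach V E x z" unfolding greach_def by (rule rtranclp.rtrancl_into_rtrancl)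
  then show ?thesis using x assms(3) by blast
qed

lemma comp_sub: "C \<in> gcomponents V E \<Longrightarrow> C \<subseteq> V"
  unfolding gcomponents_def by blast

lemma comp_reach:
  assumes "C \<in> gcomponents V E" "y \<in> C" "greach V E y z"
  shows "z \<in> C"
proof -
  obtain x where x: "x \<in> V" "C = {y \<in> V. greach V E x y}" using assms(1) unfolding gcomponents_def by blast
  have z: "z \<in> V" using assms(3) x assms(2) unfolding greach_def
    by (induction rule: rtranclp_induct) auto
  have "greach V E x z" using assms(2) x assms(3) unfolding greach_def by auto
  then show ?thesis using x z by blast
qed

lemma lift_reach:
  assumes "greach (gamma_vertices D n) (gamma_edge N D) w w'" "j \<in> D" "\<forall>x. v \<noteq> j # x"
    "w \<in> gamma_vertices D n"
  shows "greach (gamma_vertices D (Suc n) - {v}) (gamma_edge N D) (j # w) (j # w')"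
  using assms(1)
  unfolding greach_def
proof (induction rule: rtranclp_induct)
  case base then show ?case by simp
next
  case (step a b)
  have ab: "a \<in> gamma_vertices D n" "b \<in> gamma_vertices D n" "gamma_edge N D a b" using step(2) by auto
  then have "j # a \<in> gamma_vertices D (Suc n) - {v}" "j # b \<in> gamma_vertices D (Suc n) - {v}"
    using assms(2,3) unfolding gamma_vertices_def by auto
  moreover have "gamma_edge N D (j # a) (j # b)"
  proof -
    have ne: "a \<noteq> b" and "gsc_word_map N a ` gsc_attractor N D \<inter> gsc_word_map N b ` gsc_attractor N D \<noteq> {}"
      using ab(3) unfolding gamma_edge_def by auto
    then obtain x where "x \<in> gsc_word_map N a ` gsc_attractor N D" "x \<in> gsc_word_map N b ` gsc_attractor N D"
      by blast
    then have "gsc_map N j x \<in> gsc_word_map N (j # a) ` gsc_attractor N D"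
      "gsc_map N j x \<in> gsc_word_map N (j # b) ` gsc_attractor N D" by auto
    then show ?thesis using ne unfolding gamma_edge_def by blast
  qed
  ultimately show ?case using step(3) by (simp add: rtranclp.rtrancl_into_rtrancl)
qed

context
  fixes N :: nat and D :: "(nat \<times> nat) set"
  assumes N2: "N \<ge> 2" and DQ: "D \<subseteq> {0..<N} \<times> {0..<N}" and D0: "D \<noteq> {}"
begin

abbreviation "FF \<equiv> gsc_attractor N D"

lemma fD: "finite D" using DQ finite_subset by blast

lemma FF_props: "compact FF" "FF \<noteq> {}" "FF = (\<Union>i\<in>D. gsc_map N i ` FF)" "FF \<subseteq> usq"
  using attractor_props[OF N2 DQ D0] by auto

lemma cell_sub: "set w \<subseteq> D \<Longrightarrow> gsc_word_map N w ` FF \<subseteq> FF"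
  using iter_sub[of D N FF w] FF_props(3) by blast

lemma point_cell: "x \<in> FF \<Longrightarrow> \<exists>w y. w \<in> gamma_vertices D n \<and> y \<in> FF \<and> x = gsc_word_map N w y"
  using iter_decomp[OF FF_props(3), of x n] unfolding gamma_vertices_def by blast

lemma cell_closed: "closed (gsc_word_map N w ` FF)"
  using compact_continuous_image[OF cont_word FF_props(1)] compact_imp_closed by blast

lemma conn_lemma:
  assumes "connected FF" "closed A" "closed B" "FF \<subseteq> A \<union> B" "A \<inter> FF \<noteq> {}" "B \<inter> FF \<noteq> {}"
  shows "A \<inter> B \<inter> FF \<noteq> {}"
  using assms unfolding connected_closed by blast

lemma Gamma_conn:
  assumes conn: "connected FF" and w0: "w0 \<in> gamma_vertices D n" and w1: "w1 \<in> gamma_vertices D n"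
  shows "greach (gamma_vertices D n) (gamma_edge N D) w0 w1"
proof (rule ccontr)
  assume nr: "\<not> ?thesis"
  let ?V = "gamma_vertices D n"
  define A where "A = {w \<in> ?V. greach ?V (gamma_edge N D) w0 w}"
  define S1 where "S1 = (\<Union>w\<in>A. gsc_word_map N w ` FF)"
  define S2 where "S2 = (\<Union>w\<in>?V - A. gsc_word_map N w ` FF)"
  have fV: "finite ?V" using finite_V[OF fD] .
  have c1: "closed S1" unfolding S1_def A_def using fV cell_closed by (intro closed_UN) auto
  have c2: "closed S2" unfolding S2_def using fV cell_closed by (intro closed_UN) auto
  have cov: "FF \<subseteq> S1 \<union> S2"
  proof
    fix x assume "x \<in> FF"
    then obtain w y where "w \<in> ?V" "y \<in> FF" "x = gsc_word_map N w y" using point_cell by blast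
    then show "x \<in> S1 \<union> S2" unfolding S1_def S2_def by (cases "w \<in> A") auto
  qed
  have w0A: "w0 \<in> A" unfolding A_def greach_def using w0 by auto
  have w1A: "w1 \<in> ?V - A" unfolding A_def using nr w1 by auto
  obtain y0 where y0: "y0 \<in> FF" using FF_props(2) by blast
  have sw: "set w \<subseteq> D" if "w \<in> ?V" for w using that unfolding gamma_vertices_def by auto
  have n1: "S1 \<inter> FF \<noteq> {}"
    using cell_sub[OF sw[OF w0]] y0 w0A unfolding S1_def by blast
  have n2: "S2 \<inter> FF \<noteq> {}"
    using cell_sub[OF sw[of w1]] w1 y0 w1A unfolding S2_def by blast
  have "S1 \<inter> S2 \<inter> FF = {}"
  proof (rule ccontr)
    assume "S1 \<inter> S2 \<inter> FF \<noteq> {}"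
    then obtain x w w' where ww: "w \<in> A" "w' \<in> ?V - A" "x \<in> gsc_word_map N w ` FF"
      "x \<in> gsc_word_map N w' ` FF" unfolding S1_def S2_def by blast
    then have "gamma_edge N D w w'" unfolding gamma_edge_def by blast
    then have "greach ?V (gamma_edge N D) w0 w'" using ww(1,2) unfolding A_def greach_def
      by (auto intro: rtranclp.rtrancl_into_rtrancl)
    then show False using ww(2) unfolding A_def by blast
  qed
  then show False using conn_lemma[OF conn c1 c2 cov n1 n2] by blast
qed

end



context
  fixes N :: nat and D :: "(nat \<times> nat) set"
  assumes N2: "N \<ge> 2" and DQ: "D \<subseteq> {0..<N} \<times> {0..<N}" and D0: "D \<noteq> {}"
begin

abbreviation "GF \<equiv> gsc_attractor N D"

lemma finish:
  assumes k1: "k1 \<ge> 2" and a: "a \<in> D" and u: "u \<in> gamma_vertices D k1" and R: "R \<subseteq> D - {a}"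
    and H: "\<And>\<omega> j w'. \<omega> \<in> gamma_vertices D (Suc k1) \<Longrightarrow> j \<in> R \<Longrightarrow> w' \<in> gamma_vertices D k1 \<Longrightarrow>
       hd \<omega> = a \<Longrightarrow> gsc_word_map N \<omega> ` GF \<inter> gsc_word_map N (j # w') ` GF \<noteq> {} \<Longrightarrow> \<omega> = a # u"
    and yF: "y \<in> GF" and j: "j \<in> R" and eq: "gsc_map N a y \<in> gsc_map N j ` GF"
  shows "y = pstar N (u!0) (u!1)"
proof -
  define E where "E = {(int (fst j) - int (fst a), int (snd j) - int (snd a)) | j. j \<in> R}"
  define Y where "Y = {y\<in>GF. \<exists>e\<in>E. y - sh e \<in> GF}"
  have key: "gsc_map N a y = gsc_map N j z \<longleftrightarrow>
      z = y - sh (int (fst j) - int (fst a), int (snd j) - int (snd a))" for y z j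
  proof -
    have rN: "real N > 0" using N2 by simp
    show ?thesis unfolding gsc_map_def sh_def using rN
      by (cases y, cases z) (auto simp: field_simps)
  qed
  have E0: "(0,0) \<notin> E"
  proof
    assume "(0,0) \<in> E"
    then obtain j where "j \<in> R" "int (fst j) = int (fst a)" "int (snd j) = int (snd a)"
      unfolding E_def by auto
    then have "j = a" by (simp add: prod_eq_iff)
    then show False using \<open>j \<in> R\<close> R by blast
  qed
  have FQ: "GF \<subseteq> usq" and Ffix: "GF = (\<Union>d\<in>D. gsc_map N d ` GF)"
    using FF_props[OF N2 DQ D0] by auto
  have Ymem: "\<exists>j\<in>R. \<exists>z\<in>GF. gsc_map N a y = gsc_map N j z" if yY0: "y \<in> Y" for y
  proof -
    obtain e where "e \<in> E" "y - sh e \<in> GF" using yY0 unfolding Y_def by blast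
    then obtain j where "j \<in> R" "e = (int (fst j) - int (fst a), int (snd j) - int (snd a))"
      unfolding E_def by blast
    then show ?thesis using key \<open>y - sh e \<in> GF\<close> by blast
  qed
  have U: "d1 = u!0 \<and> d2 = u!1"
    if yY: "y \<in> Y" and d1: "d1 \<in> D" and d2: "d2 \<in> D" and yin: "y \<in> gsc_map N d1 ` gsc_map N d2 ` GF"
    for y d1 d2
  proof -
    obtain t where t: "t \<in> GF" "y = gsc_map N d1 (gsc_map N d2 t)" using yin by blast
    obtain w t' where w: "w \<in> gamma_vertices D (k1 - 2)" "t' \<in> GF" "t = gsc_word_map N w t'"
      using point_cell[OF N2 DQ D0 t(1)] by blast
    obtain j z where jz: "j \<in> R" "z \<in> GF" "gsc_map N a y = gsc_map N j z" using Ymem[OF yY] by blast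
    obtain w' z' where w': "w' \<in> gamma_vertices D k1" "z' \<in> GF" "z = gsc_word_map N w' z'"
      using point_cell[OF N2 DQ D0 jz(2)] by blast
    let ?\<omega> = "a # d1 # d2 # w"
    have om: "?\<omega> \<in> gamma_vertices D (Suc k1)" using a d1 d2 w k1 unfolding gamma_vertices_def by auto
    have "gsc_map N a y \<in> gsc_word_map N ?\<omega> ` GF" using t w by auto
    moreover have "gsc_map N a y \<in> gsc_word_map N (j # w') ` GF" using jz w' by auto
    ultimately have "?\<omega> = a # u" using H[OF om jz(1) w'(1)] by auto
    then show ?thesis by auto
  qed
  have yY: "y \<in> Y"
  proof -
    obtain z where z: "z \<in> GF" "gsc_map N a y = gsc_map N j z" using eq by blast
    let ?e = "(int (fst j) - int (fst a), int (snd j) - int (snd a))"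
    have "z = y - sh ?e" using key z(2) by blast
    moreover have "?e \<in> E" unfolding E_def using j by blast
    ultimately show ?thesis unfolding Y_def using yF z(1) by blast
  qed
  show ?thesis
    by (rule lemG[of N D GF E Y "u!0" "u!1" y, OF N2 DQ FQ Ffix E0 Y_def U yY])
qed

end



lemma frag:
  assumes N2: "N \<ge> 2" and DQ: "D \<subseteq> {0..<N} \<times> {0..<N}" and cD: "1 < card D"
    and conn: "connected (gsc_attractor N D)" and b1: "b1 \<in> D"
    and X: "gsc_map N b1 ` gsc_attractor N D \<inter> (\<Union>j\<in>D - {b1}. gsc_map N j ` gsc_attractor N D) \<subseteq> {p}"
  shows "fragile N D"
proof -
  let ?F = "gsc_attractor N D"
  have D0: "D \<noteq> {}" using cD by auto
  have fD: "finite D" using DQ finite_subset by blast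
  have D2: "D - {b1} \<noteq> {}"
  proof
    assume "D - {b1} = {}"
    then have "D \<subseteq> {b1}" by blast
    then have "card D \<le> 1" using card_mono[of "{b1}" D] by simp
    then show False using cD by simp
  qed
  note FP = FF_props[OF N2 DQ D0]
  have cl1: "closed (gsc_map N b1 ` ?F)"
    using compact_continuous_image[OF cont_map FP(1)] compact_imp_closed by blast
  have cl2: "closed (\<Union>j\<in>D - {b1}. gsc_map N j ` ?F)"
    using fD compact_continuous_image[OF cont_map FP(1)] compact_imp_closed by (intro closed_UN) auto
  have cov: "?F \<subseteq> gsc_map N b1 ` ?F \<union> (\<Union>j\<in>D - {b1}. gsc_map N j ` ?F)"
    using FP(3) by blast
  obtain y0 where y0: "y0 \<in> ?F" using FP(2) by blast
  have sub: "gsc_map N j ` ?F \<subseteq> ?F" if "j \<in> D" for j using FP(3) that by blast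
  have n1: "gsc_map N b1 ` ?F \<inter> ?F \<noteq> {}" using sub[OF b1] y0 by blast
  obtain j0 where j0: "j0 \<in> D - {b1}" using D2 by blast
  have n2: "(\<Union>j\<in>D - {b1}. gsc_map N j ` ?F) \<inter> ?F \<noteq> {}" using sub[of j0] j0 y0 by blast
  have "gsc_map N b1 ` ?F \<inter> (\<Union>j\<in>D - {b1}. gsc_map N j ` ?F) \<inter> ?F \<noteq> {}"
    by (rule conn_lemma[OF N2 DQ D0 conn cl1 cl2 cov n1 n2])
  then have "gsc_map N b1 ` ?F \<inter> (\<Union>j\<in>D - {b1}. gsc_map N j ` ?F) = {p}" using X by blast
  then show ?thesis unfolding fragile_def
    by (intro exI[of _ "{b1}"] exI[of _ "D - {b1}"]) (use b1 D2 in auto)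
qed



lemma aux_disj: "(c::nat) \<noteq> a \<Longrightarrow> c = a \<or> c = b \<Longrightarrow> c = b" by blast

theorem mainTheorem15:
  fixes N :: nat and D :: "(nat \<times> nat) set" and k :: nat
  assumes "N \<ge> 2"
    and "D \<subseteq> {0..<N} \<times> {0..<N}"
    and "1 < card D" and "card D < N ^ 2"
    and "connected (gsc_attractor N D)"
    and "k \<ge> 3"
    and "chi (gamma_vertices D k) (gamma_edge N D) = card D ^ (k - 1) - 1 \<or>
         chi (gamma_vertices D k) (gamma_edge N D) = card D ^ (k - 1)"
  shows "fragile N D"
proof -
  note N2 = assms(1) and DQ = assms(2) and cD = assms(3) and conn = assms(5)
  let ?F = "gsc_attractor N D"
  let ?E = "gamma_edge N D"
  have D0: "D \<noteq> {}" using cD by auto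
  have fD: "finite D" using DQ finite_subset by blast
  obtain k1 where k: "k = Suc k1" and k1: "k1 \<ge> 2" using assms(6) by (cases k) auto
  let ?V = "gamma_vertices D k"
  let ?V1 = "gamma_vertices D k1"
  define m where "m = card D ^ k1"
  have m4: "m \<ge> 4"
  proof -
    have "(2::nat) ^ 2 \<le> card D ^ 2" using cD by (intro power_mono) auto
    also have "\<dots> \<le> card D ^ k1" using cD k1 by (intro power_increasing) auto
    finally show ?thesis unfolding m_def by simp
  qed
  have hchi: "chi ?V ?E = m - 1 \<or> chi ?V ?E = m" using assms(7) k unfolding m_def by simp
  have fV: "finite ?V" using finite_V[OF fD] .
  obtain v C where v: "v \<in> ?V" and C: "C \<in> gcomponents (?V - {v}) ?E"
    and cC: "card C = m - 1 \<or> card C = m"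
  proof -
    define S0 where "S0 = {second_largest_size (gcomponents (?V - {v}) ?E) | v. cut_vertex ?V ?E v}"
    have "S0 \<subseteq> (\<lambda>v. second_largest_size (gcomponents (?V - {v}) ?E)) ` ?V"
      unfolding S0_def cut_vertex_def by blast
    then have fS0: "finite S0" using fV finite_surj by blast
    have "chi ?V ?E \<in> S0 \<union> {0}" unfolding chi_def S0_def[symmetric]
      by (rule Max_in) (use fS0 in auto)
    moreover have "chi ?V ?E \<noteq> 0" using hchi m4 by auto
    ultimately have "chi ?V ?E \<in> S0" by blast
    then obtain v where cv: "cut_vertex ?V ?E v"
      and sv0: "chi ?V ?E = second_largest_size (gcomponents (?V - {v}) ?E)" unfolding S0_def by blast
    note sv = sv0[symmetric]
    have vV: "v \<in> ?V" using cv unfolding cut_vertex_def by blast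
    let ?S = "gcomponents (?V - {v}) ?E"
    have "?S \<subseteq> Pow (?V - {v})" using comp_sub by blast
    then have fS: "finite ?S" using fV finite_subset by blast
    define T where "T = {card C | C. C \<in> ?S \<and> (\<exists>C'\<in>?S. C' \<noteq> C \<and> card C \<le> card C')}"
    have "T \<subseteq> card ` ?S" unfolding T_def by blast
    then have fT: "finite T" using fS finite_surj by blast
    have "second_largest_size ?S \<in> T \<union> {0}" unfolding second_largest_size_def T_def[symmetric]
      by (rule Max_in) (use fT in auto)
    then have "chi ?V ?E \<in> T" using sv \<open>chi ?V ?E \<noteq> 0\<close> by auto
    then obtain C where cC0: "chi ?V ?E = card C" and CS: "C \<in> ?S" unfolding T_def by blast
    show ?thesis by (rule that[OF vV CS]) (use hchi cC0 in simp)
  qed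
  obtain i0 u where vu: "v = i0 # u" and i0: "i0 \<in> D" and u: "u \<in> ?V1"
    using v k unfolding gamma_vertices_def by (cases v) auto
  have CV: "C \<subseteq> ?V - {v}" using comp_sub[OF C] .
  have fC: "finite C" using CV fV finite_subset by blast
  have cardB: "card (Cons j ` ?V1) = m" for j
  proof -
    have "inj_on (Cons j) ?V1" by (simp add: inj_on_def)
    then have "card (Cons j ` ?V1) = card ?V1" by (rule card_image)
    then show ?thesis using card_V[OF fD, of k1] unfolding m_def by simp
  qed
  have fB: "finite (Cons j ` ?V1)" for j using finite_V[OF fD] by simp
  have Vdec: "y \<in> ?V \<Longrightarrow> \<exists>j w. y = j # w \<and> j \<in> D \<and> w \<in> ?V1" for y
    using k unfolding gamma_vertices_def by (cases y) auto
  have BV: "Cons j ` ?V1 \<subseteq> ?V" if "j \<in> D" for j using that k unfolding gamma_vertices_def by auto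
  have bl: "Cons j ` ?V1 \<subseteq> C" if j: "j \<in> D" "j \<noteq> i0" and w: "w \<in> ?V1" "j # w \<in> C" for j w
  proof
    fix y assume "y \<in> Cons j ` ?V1"
    then obtain w' where w': "w' \<in> ?V1" "y = j # w'" by blast
    have "greach ?V1 ?E w w'" by (rule Gamma_conn[OF N2 DQ D0 conn w(1) w'(1)])
    moreover have "\<forall>x. v \<noteq> j # x" using vu j(2) by simp
    ultimately have "greach (gamma_vertices D (Suc k1) - {v}) ?E (j # w) (j # w')"
      using lift_reach j(1) w(1) by blast
    then have "greach (?V - {v}) ?E (j # w) (j # w')" using k by simp
    from comp_reach[OF C w(2) this] show "y \<in> C" using w'(2) by simp
  qed
  have cc: "gsc_word_map N y ` ?F \<inter> gsc_word_map N z ` ?F = {}"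
    if "y \<in> C" "z \<in> ?V - {v}" "z \<notin> C" for y z
  proof (rule ccontr)
    assume "gsc_word_map N y ` ?F \<inter> gsc_word_map N z ` ?F \<noteq> {}"
    moreover have "y \<noteq> z" using that by blast
    ultimately have "?E y z" unfolding gamma_edge_def by blast
    then have "z \<in> C" using comp_closed[OF C that(1,2)] by blast
    then show False using that by blast
  qed
  have vB: "v \<in> Cons i0 ` ?V1" using vu u by blast
  show ?thesis
  proof (cases "card C = m - 1")
    case True
    have sub: "C \<subseteq> Cons i0 ` ?V1 - {v}"
    proof
      fix y assume yC: "y \<in> C"
      then obtain j w where jw: "y = j # w" "j \<in> D" "w \<in> ?V1" using Vdec CV by blast
      have "j = i0"
      proof (rule ccontr)
        assume "j \<noteq> i0"
        then have "Cons j ` ?V1 \<subseteq> C" using bl jw yC by blast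
        then have "card (Cons j ` ?V1) \<le> card C" by (rule card_mono[OF fC])
        then have "m \<le> card C" using cardB[of j] by simp
        then show False using True m4 by simp
      qed
      then show "y \<in> Cons i0 ` ?V1 - {v}" using jw yC CV by blast
    qed
    have "card (Cons i0 ` ?V1 - {v}) = m - 1" using cardB vB fB by (simp add: card_Diff_singleton)
    then have "card C = card (Cons i0 ` ?V1 - {v})" using True by simp
    then have Ceq: "C = Cons i0 ` ?V1 - {v}" using card_subset_eq[OF _ sub] fB by blast
    have H: "\<omega> = i0 # u"
      if om: "\<omega> \<in> gamma_vertices D (Suc k1)" and j: "j \<in> D - {i0}" and w': "w' \<in> ?V1"
        and hd: "hd \<omega> = i0" and int: "gsc_word_map N \<omega> ` ?F \<inter> gsc_word_map N (j # w') ` ?F \<noteq> {}"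
      for \<omega> j w'
    proof (rule ccontr)
      assume ne: "\<omega> \<noteq> i0 # u"
      obtain t where "\<omega> = i0 # t" "t \<in> ?V1" using om hd unfolding gamma_vertices_def
        by (cases \<omega>) auto
      then have omC: "\<omega> \<in> C" using Ceq ne vu by blast
      have jV: "j # w' \<in> ?V" using BV[of j] j w' by blast
      have jV2: "j # w' \<in> ?V - {v}" and jnC: "j # w' \<notin> C" using jV j Ceq vu by auto
      show False using cc[OF omC jV2 jnC] int by simp
    qed
    have X: "gsc_map N i0 ` ?F \<inter> (\<Union>j\<in>D - {i0}. gsc_map N j ` ?F) \<subseteq> {gsc_map N i0 (pstar N (u!0) (u!1))}"
    proof
      fix x assume "x \<in> gsc_map N i0 ` ?F \<inter> (\<Union>j\<in>D - {i0}. gsc_map N j ` ?F)"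
      then obtain y j where y: "y \<in> ?F" "x = gsc_map N i0 y" and j: "j \<in> D - {i0}" "x \<in> gsc_map N j ` ?F"
        by blast
      have "y = pstar N (u!0) (u!1)"
      proof (rule finish[OF N2 DQ D0 k1 i0 u subset_refl H y(1) j(1)])
        show "gsc_map N i0 y \<in> gsc_map N j ` ?F" using y(2) j(2) by simp
      qed
      then show "x \<in> {gsc_map N i0 (pstar N (u!0) (u!1))}" using y by simp
    qed
    show ?thesis by (rule frag[OF N2 DQ cD conn i0 X])
  next
    case False
    have cm: "card C = m" by (rule aux_disj[OF False cC])
    have "\<not> C \<subseteq> Cons i0 ` ?V1 - {v}"
    proof
      assume "C \<subseteq> Cons i0 ` ?V1 - {v}"
      then have "card C \<le> card (Cons i0 ` ?V1 - {v})" by (rule card_mono[OF finite_Diff[OF fB]])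
      also have "\<dots> = m - 1" using cardB vB fB by (simp add: card_Diff_singleton)
      finally show False using cm m4 by simp
    qed
    then obtain y where yC: "y \<in> C" and yn: "y \<notin> Cons i0 ` ?V1 - {v}" by blast
    obtain b w where bw: "y = b # w" "b \<in> D" "w \<in> ?V1" using Vdec CV yC by blast
    have bi: "b \<noteq> i0" using yn bw yC CV by blast
    have "Cons b ` ?V1 \<subseteq> C" using bl bi bw yC by blast
    moreover have "card (Cons b ` ?V1) = card C" using cardB[of b] cm by simp
    ultimately have "Cons b ` ?V1 = C" by (rule card_subset_eq[OF fC])
    then have Ceq: "C = Cons b ` ?V1" by simp
    have H: "\<omega> = i0 # u"
      if om: "\<omega> \<in> gamma_vertices D (Suc k1)" and j: "j \<in> {b}" and w': "w' \<in> ?V1"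
        and hd: "hd \<omega> = i0" and int: "gsc_word_map N \<omega> ` ?F \<inter> gsc_word_map N (j # w') ` ?F \<noteq> {}"
      for \<omega> j w'
    proof (rule ccontr)
      assume ne: "\<omega> \<noteq> i0 # u"
      have om1: "\<omega> \<in> ?V - {v}" and om2: "\<omega> \<notin> C" using om ne vu hd bi Ceq k by auto
      have jC: "j # w' \<in> C" using j w' Ceq by blast
      show False using cc[OF jC om1 om2] int by (simp add: Int_commute)
    qed
    have X: "gsc_map N b ` ?F \<inter> (\<Union>j\<in>D - {b}. gsc_map N j ` ?F) \<subseteq> {gsc_map N i0 (pstar N (u!0) (u!1))}"
    proof
      fix x assume "x \<in> gsc_map N b ` ?F \<inter> (\<Union>j\<in>D - {b}. gsc_map N j ` ?F)"
      then obtain y j z where y: "y \<in> ?F" "x = gsc_map N b y" and j: "j \<in> D - {b}"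
        and z: "z \<in> ?F" "x = gsc_map N j z"
        by blast
      obtain w1 y1 where w1: "w1 \<in> ?V1" "y1 \<in> ?F" "y = gsc_word_map N w1 y1"
        using point_cell[OF N2 DQ D0 y(1)] by blast
      obtain w2 z2 where w2: "w2 \<in> ?V1" "z2 \<in> ?F" "z = gsc_word_map N w2 z2"
        using point_cell[OF N2 DQ D0 z(1)] by blast
      have bC: "b # w1 \<in> C" using Ceq w1 by blast
      have xin1: "x \<in> gsc_word_map N (b # w1) ` ?F" using y(2) w1(2,3) by auto
      have xin2: "x \<in> gsc_word_map N (j # w2) ` ?F" using z(2) w2(2,3) by auto
      note xin = xin1 xin2
      have jV: "j # w2 \<in> ?V" using BV[of j] j w2 by blast
      have jnC: "j # w2 \<notin> C" using j Ceq by auto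
      have "j # w2 = v"
      proof (rule ccontr)
        assume "j # w2 \<noteq> v"
        then have "j # w2 \<in> ?V - {v}" using jV by simp
        from cc[OF bC this jnC] xin show False by blast
      qed
      then have ji: "j = i0" using vu by simp
      have "z = pstar N (u!0) (u!1)"
      proof -
        have bs: "{b} \<subseteq> D - {i0}" using bi bw(2) by simp
        have bb: "b \<in> {b}" by simp
        have "gsc_map N i0 z = gsc_map N b y" using y(2) z(2) ji by simp
        then have eqz: "gsc_map N i0 z \<in> gsc_map N b ` ?F" using y(1) by simp
        show ?thesis by (rule finish[OF N2 DQ D0 k1 i0 u bs H z(1) bb eqz])
      qed
      then show "x \<in> {gsc_map N i0 (pstar N (u!0) (u!1))}" using z ji by simp
    qed
    show ?thesis by (rule frag[OF N2 DQ cD conn bw(2) X])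
  qed
qed


end
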